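(* For all integers $n\ge 4$, $m\ge 2$ and $k\in\{2,\ldots,n-2\}$, $$\chi_{\mu_k}(P_n\boxtimes K_m)=\begin{cases}2\lfloor\frac{n}{k+2}\rfloor & \text{if } n\equiv 0 \pmod{k+2},\\ 2\lfloor\frac{n}{k+2}\rfloor+1 & \text{if } n\equiv 1,2 \pmod{k+2},\\ 2\lfloor\frac{n}{k+2}\rfloor+2 & \text{otherwise.}\end{cases}$$
   Context: $P_n$ is the path on $n$ vertices and $K_m$ the complete graph. The strong product $G\boxtimes H$ has vertex set $V(G)\times V(H)$, with distinct $(g,h),(g',h')$ adjacent iff ($g=g'$ or $gg'\in E(G)$) and ($h=h'$ or $hh'\in E(H)$). For a positive integer $k$, a set $M\subseteq V(X)$ is a $k$-distance mutual-visibility set if for every two vertices $u,v\in M$ there exists a shortest $u,v$-path of length at most $k$ none of whose internal vertices lies in $M$. $\chi_{\mu_k}(X)$ is the minimum cardinality of a partition of $V(X)$ into $k$-distance mutual-visibility sets. *)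

theory Defs
  imports Main
begin

text \<open>A graph is given by a vertex set V and an adjacency relation E
  (assumed symmetric and irreflexive on V).\<close>

definition path_graph :: "nat \<Rightarrow> nat set \<times> (nat \<Rightarrow> nat \<Rightarrow> bool)" where
  "path_graph n = ({0..<n}, (\<lambda>i j. i + 1 = j \<or> j + 1 = i))"

definition complete_graph :: "nat \<Rightarrow> nat set \<times> (nat \<Rightarrow> nat \<Rightarrow> bool)" where
  "complete_graph m = ({0..<m}, (\<lambda>i j. i \<noteq> j))"

definition strong_product ::
  "'a set \<times> ('a \<Rightarrow> 'a \<Rightarrow> bool) \<Rightarrow> 'b set \<times> ('b \<Rightarrow> 'b \<Rightarrow> bool)
     \<Rightarrow> ('a \<times> 'b) set \<times> ('a \<times> 'b \<Rightarrow> 'a \<times> 'b \<Rightarrow> bool)" where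
  "strong_product G H =
     (fst G \<times> fst H,
      (\<lambda>(g, h) (g', h'). (g, h) \<noteq> (g', h') \<and>
          (g = g' \<or> snd G g g') \<and> (h = h' \<or> snd H h h')))"

definition is_walk :: "'a set \<times> ('a \<Rightarrow> 'a \<Rightarrow> bool) \<Rightarrow> 'a list \<Rightarrow> bool" where
  "is_walk G p \<longleftrightarrow> p \<noteq> [] \<and> set p \<subseteq> fst G \<and>
     (\<forall>i. Suc i < length p \<longrightarrow> snd G (p ! i) (p ! Suc i))"

definition walk_between :: "'a set \<times> ('a \<Rightarrow> 'a \<Rightarrow> bool) \<Rightarrow> 'a \<Rightarrow> 'a \<Rightarrow> 'a list \<Rightarrow> bool" where
  "walk_between G u v p \<longleftrightarrow> is_walk G p \<and> hd p = u \<and> last p = v"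

definition gdist :: "'a set \<times> ('a \<Rightarrow> 'a \<Rightarrow> bool) \<Rightarrow> 'a \<Rightarrow> 'a \<Rightarrow> nat" where
  "gdist G u v = (LEAST l. \<exists>p. walk_between G u v p \<and> length p = Suc l)"

definition shortest_path :: "'a set \<times> ('a \<Rightarrow> 'a \<Rightarrow> bool) \<Rightarrow> 'a \<Rightarrow> 'a \<Rightarrow> 'a list \<Rightarrow> bool" where
  "shortest_path G u v p \<longleftrightarrow> walk_between G u v p \<and> length p = Suc (gdist G u v)"

definition k_dist_mv_set :: "'a set \<times> ('a \<Rightarrow> 'a \<Rightarrow> bool) \<Rightarrow> nat \<Rightarrow> 'a set \<Rightarrow> bool" where
  "k_dist_mv_set G k M \<longleftrightarrow> M \<subseteq> fst G \<and>
     (\<forall>u\<in>M. \<forall>v\<in>M. \<exists>p. shortest_path G u v p \<and> length p - 1 \<le> k \<and>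
         (\<forall>x\<in>set (butlast (tl p)). x \<notin> M))"

definition is_partition :: "'a set \<Rightarrow> 'a set set \<Rightarrow> bool" where
  "is_partition V P \<longleftrightarrow> \<Union>P = V \<and> {} \<notin> P \<and>
     (\<forall>A\<in>P. \<forall>B\<in>P. A \<noteq> B \<longrightarrow> A \<inter> B = {})"

definition chi_mu_k :: "nat \<Rightarrow> 'a set \<times> ('a \<Rightarrow> 'a \<Rightarrow> bool) \<Rightarrow> nat" where
  "chi_mu_k k G = (LEAST c. \<exists>P. is_partition (fst G) P \<and> finite P \<and> card P = c \<and>
                      (\<forall>M\<in>P. k_dist_mv_set G k M))"

end

theory Submission
  imports Defs
begin


definition SG :: "nat \<Rightarrow> nat \<Rightarrow> (nat \<times> nat) set \<times> (nat \<times> nat \<Rightarrow> nat \<times> nat \<Rightarrow> bool)" where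
  "SG n m = strong_product (path_graph n) (complete_graph m)"

lemma SG_V: "fst (SG n m) = {0..<n} \<times> {0..<m}"
  by (simp add: SG_def strong_product_def path_graph_def complete_graph_def)

lemma SG_E: "snd (SG n m) u v \<longleftrightarrow> u \<noteq> v \<and> (fst u = fst v \<or> fst u + 1 = fst v \<or> fst v + 1 = fst u)"
  by (cases u; cases v) (auto simp add: SG_def strong_product_def path_graph_def complete_graph_def)

lemma walk_col_diff:
  assumes "is_walk (SG n m) p" "i \<le> j" "j < length p"
  shows "fst (p!j) \<le> fst (p!i) + (j - i) \<and> fst (p!i) \<le> fst (p!j) + (j - i)"
  using assms(2,3)
proof (induction j)
  case 0
  then show ?case by simp
next
  case (Suc j)
  show ?case
  proof (cases "i = Suc j")
    case True
    then show ?thesis by simp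
  next
    case False
    then have "i \<le> j" using Suc.prems by simp
    with Suc have IH: "fst (p!j) \<le> fst (p!i) + (j - i) \<and> fst (p!i) \<le> fst (p!j) + (j - i)" by simp
    have "snd (SG n m) (p!j) (p!Suc j)" using assms(1) Suc.prems unfolding is_walk_def by blast
    then have "fst (p!Suc j) \<le> fst (p!j) + 1 \<and> fst (p!j) \<le> fst (p!Suc j) + 1"
      unfolding SG_E by auto
    with IH \<open>i \<le> j\<close> show ?thesis by auto
  qed
qed

lemma walk_between_len:
  assumes "walk_between (SG n m) u v p"
  shows "fst v \<le> fst u + (length p - 1) \<and> fst u \<le> fst v + (length p - 1)"
proof -
  have w: "is_walk (SG n m) p" and ne: "p \<noteq> []" and h: "hd p = u" and l: "last p = v"
    using assms unfolding walk_between_def is_walk_def by auto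
  have "p!0 = u" using h ne by (simp add: hd_conv_nth)
  moreover have "p!(length p - 1) = v" using l ne by (simp add: last_conv_nth)
  ultimately show ?thesis using walk_col_diff[OF w, of 0 "length p - 1"] ne by simp
qed

lemma gdist_eqI:
  assumes "walk_between G u v p" "length p = Suc d"
    "\<And>q. walk_between G u v q \<Longrightarrow> Suc d \<le> length q"
  shows "gdist G u v = d"
  unfolding gdist_def
proof (rule Least_equality)
  show "\<exists>p. walk_between G u v p \<and> length p = Suc d" using assms by blast
next
  fix y assume "\<exists>p. walk_between G u v p \<and> length p = Suc y"
  then show "d \<le> y" using assms(3) by fastforce
qed

definition mkpath :: "nat \<times> nat \<Rightarrow> nat \<times> nat \<Rightarrow> (nat \<Rightarrow> nat) \<Rightarrow> (nat \<times> nat) list" where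
  "mkpath u v \<rho> = map (\<lambda>x. if x = fst u then u else if x = fst v then v else (x, \<rho> x)) [fst u..<Suc (fst v)]"

lemma mkpath_props:
  assumes "u \<in> fst (SG n m)" "v \<in> fst (SG n m)" "fst u < fst v" "\<And>x. fst u < x \<Longrightarrow> x < fst v \<Longrightarrow> \<rho> x < m"
  shows "walk_between (SG n m) u v (mkpath u v \<rho>)"
    "length (mkpath u v \<rho>) = Suc (fst v - fst u)"
    "set (butlast (tl (mkpath u v \<rho>))) = (\<lambda>x. (x, \<rho> x)) ` {fst u<..<fst v}"
proof -
  define g where "g = (\<lambda>x. if x = fst u then u else if x = fst v then v else (x, \<rho> x))"
  have mp: "mkpath u v \<rho> = map g [fst u..<Suc (fst v)]" unfolding mkpath_def g_def by simp
  have gf: "fst (g x) = x" for x unfolding g_def by auto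
  show len: "length (mkpath u v \<rho>) = Suc (fst v - fst u)" unfolding mp using assms(3) by simp
  have nth: "mkpath u v \<rho> ! i = g (fst u + i)" if "i < Suc (fst v - fst u)" for i
    unfolding mp using that assms(3) by (simp del: upt_Suc)
  have "is_walk (SG n m) (mkpath u v \<rho>)"
    unfolding is_walk_def
  proof (intro conjI allI impI)
    show "mkpath u v \<rho> \<noteq> []" using len by auto
    show "set (mkpath u v \<rho>) \<subseteq> fst (SG n m)"
    proof
      fix w assume "w \<in> set (mkpath u v \<rho>)"
      then obtain x where x: "fst u \<le> x" "x \<le> fst v" "w = g x" unfolding mp by auto
      show "w \<in> fst (SG n m)"
      proof (cases "x = fst u \<or> x = fst v")
        case True then show ?thesis using x assms(1,2) unfolding g_def by auto
      next
        case False
        then have "fst u < x" "x < fst v" using x by auto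
        then show ?thesis using x assms unfolding g_def SG_V by auto
      qed
    qed
    fix i assume "Suc i < length (mkpath u v \<rho>)"
    then show "snd (SG n m) (mkpath u v \<rho> ! i) (mkpath u v \<rho> ! Suc i)"
    proof -
      have a: "mkpath u v \<rho> ! i = g (fst u + i)" "mkpath u v \<rho> ! Suc i = g (fst u + Suc i)"
        using len nth[of i] nth[of "Suc i"] \<open>Suc i < length (mkpath u v \<rho>)\<close> by auto
      have "g (fst u + i) \<noteq> g (fst u + Suc i)" using gf by (metis add_Suc_right n_not_Suc_n)
      then show ?thesis unfolding a SG_E gf by simp
    qed
  qed
  moreover have "hd (mkpath u v \<rho>) = u" unfolding mp using assms(3) by (simp add: g_def upt_rec)
  moreover have "last (mkpath u v \<rho>) = v" unfolding mp using assms(3)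
    by (simp add: g_def last_map)
  ultimately show "walk_between (SG n m) u v (mkpath u v \<rho>)" unfolding walk_between_def by simp
  have "butlast (tl [fst u..<Suc (fst v)]) = [Suc (fst u)..<fst v]"
    using assms(3) by (simp add: tl_upt)
  then have "set (butlast (tl (mkpath u v \<rho>))) = g ` {Suc (fst u)..<fst v}"
    unfolding mp by (simp add: map_butlast[symmetric] map_tl[symmetric])
  also have "\<dots> = (\<lambda>x. (x, \<rho> x)) ` {fst u<..<fst v}"
    unfolding g_def by (auto intro!: image_cong)
  finally show "set (butlast (tl (mkpath u v \<rho>))) = (\<lambda>x. (x, \<rho> x)) ` {fst u<..<fst v}" .
qed


lemma walk_rev:
  assumes "walk_between (SG n m) u v p"
  shows "walk_between (SG n m) v u (rev p)"
proof -
  have w: "p \<noteq> []" "set p \<subseteq> fst (SG n m)" "\<And>i. Suc i < length p \<Longrightarrow> snd (SG n m) (p!i) (p!Suc i)"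
    "hd p = u" "last p = v"
    using assms unfolding walk_between_def is_walk_def by auto
  have "snd (SG n m) (rev p ! i) (rev p ! Suc i)" if "Suc i < length (rev p)" for i
  proof -
    have "snd (SG n m) (p!(length p - Suc (Suc i))) (p!Suc (length p - Suc (Suc i)))"
      using w(3)[of "length p - Suc (Suc i)"] that by simp
    moreover have "Suc (length p - Suc (Suc i)) = length p - Suc i" using that by simp
    ultimately show ?thesis using that unfolding SG_E by (auto simp: rev_nth)
  qed
  then show ?thesis using w unfolding walk_between_def is_walk_def
    by (auto simp: hd_rev last_rev)
qed

lemma walk_len_ge:
  assumes "walk_between (SG n m) u v q"
  shows "Suc (fst v - fst u) \<le> length q" "Suc (fst u - fst v) \<le> length q"
proof -
  have "q \<noteq> []" using assms unfolding walk_between_def is_walk_def by auto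
  then show "Suc (fst v - fst u) \<le> length q" "Suc (fst u - fst v) \<le> length q"
    using walk_between_len[OF assms] by (cases q; auto)+
qed

lemma gdist_lt:
  assumes "u \<in> fst (SG n m)" "v \<in> fst (SG n m)" "fst u < fst v"
  shows "gdist (SG n m) u v = fst v - fst u" "gdist (SG n m) v u = fst v - fst u"
proof -
  have m: "0 < m" using assms(1) unfolding SG_V by auto
  let ?p = "mkpath u v (\<lambda>_. 0)"
  have p: "walk_between (SG n m) u v ?p" "length ?p = Suc (fst v - fst u)"
    using mkpath_props[OF assms, of "\<lambda>_. 0"] m by auto
  show "gdist (SG n m) u v = fst v - fst u"
    by (rule gdist_eqI[OF p]) (rule walk_len_ge)
  show "gdist (SG n m) v u = fst v - fst u"
    by (rule gdist_eqI[OF walk_rev[OF p(1)]]) (use walk_len_ge p(2) in auto)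
qed

lemma mv_span:
  assumes "k_dist_mv_set (SG n m) k M" "u \<in> M" "v \<in> M"
  shows "fst v \<le> fst u + k"
proof -
  obtain p where "shortest_path (SG n m) u v p" "length p - 1 \<le> k"
    using assms unfolding k_dist_mv_set_def by blast
  then show ?thesis using walk_between_len[of n m u v p] unfolding shortest_path_def by auto
qed

lemma mv_gap:
  assumes "k_dist_mv_set (SG n m) k M" "u \<in> M" "v \<in> M" "fst u < x" "x < fst v"
  shows "\<exists>j<m. (x, j) \<notin> M"
proof -
  have MV: "M \<subseteq> fst (SG n m)" using assms(1) unfolding k_dist_mv_set_def by blast
  obtain p where sp: "shortest_path (SG n m) u v p" and int: "\<forall>y\<in>set (butlast (tl p)). y \<notin> M"
    using assms unfolding k_dist_mv_set_def by blast
  have len: "length p = Suc (fst v - fst u)"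
    using sp gdist_lt(1)[of u n m v] MV assms(2,3,4,5) unfolding shortest_path_def by auto
  have w: "is_walk (SG n m) p" "hd p = u" "last p = v" "p \<noteq> []"
    using sp unfolding shortest_path_def walk_between_def is_walk_def by auto
  have p0: "p!0 = u" using w by (simp add: hd_conv_nth)
  have pl: "p!(length p - 1) = v" using w by (simp add: last_conv_nth)
  define i where "i = x - fst u"
  have i: "0 < i" "i < length p - 1" using assms(4,5) len unfolding i_def by auto
  have c1: "fst (p!i) \<le> fst u + i" using walk_col_diff[OF w(1), of 0 i] p0 i by auto
  have c2: "fst v \<le> fst (p!i) + (length p - 1 - i)" using walk_col_diff[OF w(1), of i "length p - 1"] pl i by auto
  have fx: "fst (p!i) = x" using c1 c2 len assms(4,5) unfolding i_def by auto
  have "butlast (tl p) ! (i - 1) = p ! i" using i by (simp add: nth_butlast nth_tl)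
  then have "p ! i \<in> set (butlast (tl p))" proof -
    have "i - 1 < length (butlast (tl p))" using i by simp
    then show ?thesis using \<open>butlast (tl p) ! (i - 1) = p ! i\<close> by (metis nth_mem)
  qed
  then have "p ! i \<notin> M" using int by blast
  moreover have "p ! i \<in> fst (SG n m)" using w i unfolding is_walk_def by auto
  ultimately show ?thesis using fx unfolding SG_V by (cases "p!i") auto
qed


lemma butlast_tl_rev: "butlast (tl (rev xs)) = rev (butlast (tl xs))"
proof -
  have "tl (rev xs) = rev (butlast xs)" by (metis butlast_rev rev_rev_ident)
  then show ?thesis by (simp add: butlast_rev butlast_tl)
qed

lemma mv_intro:
  assumes MV: "M \<subseteq> fst (SG n m)" and k: "1 \<le> k"
    and span: "\<And>u v. u \<in> M \<Longrightarrow> v \<in> M \<Longrightarrow> fst v \<le> fst u + k"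
    and gap: "\<And>u v x. u \<in> M \<Longrightarrow> v \<in> M \<Longrightarrow> fst u < x \<Longrightarrow> x < fst v \<Longrightarrow> \<exists>j<m. (x, j) \<notin> M"
  shows "k_dist_mv_set (SG n m) k M"
  unfolding k_dist_mv_set_def
proof (intro conjI ballI)
  show "M \<subseteq> fst (SG n m)" by fact
  fix u v assume u: "u \<in> M" and v: "v \<in> M"
  have uV: "u \<in> fst (SG n m)" and vV: "v \<in> fst (SG n m)" using u v MV by auto
  define \<rho> where "\<rho> = (\<lambda>x. SOME j. j < m \<and> (x, j) \<notin> M)"
  have \<rho>: "\<rho> x < m \<and> (x, \<rho> x) \<notin> M" if "a \<in> M" "b \<in> M" "fst a < x" "x < fst b" for a b x
    unfolding \<rho>_def by (rule someI_ex) (use gap[OF that] in auto)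
  consider "u = v" | "u \<noteq> v" "fst u = fst v" | "fst u < fst v" | "fst v < fst u" by linarith
  then show "\<exists>p. shortest_path (SG n m) u v p \<and> length p - 1 \<le> k \<and> (\<forall>x\<in>set (butlast (tl p)). x \<notin> M)"
  proof cases
    case 1
    have w: "walk_between (SG n m) u v [u]" using uV 1 unfolding walk_between_def is_walk_def by auto
    have "gdist (SG n m) u v = 0" by (rule gdist_eqI[OF w]) (auto simp: walk_between_def is_walk_def Suc_le_eq)
    then show ?thesis using w unfolding shortest_path_def by (intro exI[of _ "[u]"]) auto
  next
    case 2
    have w: "walk_between (SG n m) u v [u, v]" using uV vV 2 unfolding walk_between_def is_walk_def SG_E
      by (auto simp: nth_Cons split: nat.splits)
    have "gdist (SG n m) u v = 1"
    proof (rule gdist_eqI[OF w])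
      fix q assume q: "walk_between (SG n m) u v q"
      show "Suc 1 \<le> length q"
      proof (rule ccontr)
        assume "\<not> Suc 1 \<le> length q"
        moreover have "q \<noteq> []" using q unfolding walk_between_def is_walk_def by auto
        ultimately obtain a where "q = [a]" by (cases q) (auto simp: Suc_le_eq)
        then show False using q 2 unfolding walk_between_def by auto
      qed
    qed simp
    then show ?thesis using w k unfolding shortest_path_def by (intro exI[of _ "[u, v]"]) auto
  next
    case 3
    let ?p = "mkpath u v \<rho>"
    have pp: "walk_between (SG n m) u v ?p" "length ?p = Suc (fst v - fst u)"
      "set (butlast (tl ?p)) = (\<lambda>x. (x, \<rho> x)) ` {fst u<..<fst v}"
      using mkpath_props[OF uV vV 3, of \<rho>] \<rho>[OF u v] by auto
    have "gdist (SG n m) u v = fst v - fst u" using gdist_lt[OF uV vV 3] by simp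
    then show ?thesis using pp span[OF u v] \<rho>[OF u v] unfolding shortest_path_def
      by (intro exI[of _ ?p]) auto
  next
    case 4
    let ?p = "mkpath v u \<rho>"
    have pp: "walk_between (SG n m) v u ?p" "length ?p = Suc (fst u - fst v)"
      "set (butlast (tl ?p)) = (\<lambda>x. (x, \<rho> x)) ` {fst v<..<fst u}"
      using mkpath_props[OF vV uV 4, of \<rho>] \<rho>[OF v u] by auto
    have s: "set (butlast (tl (rev ?p))) = set (butlast (tl ?p))"
      by (simp only: butlast_tl_rev set_rev)
    have "gdist (SG n m) u v = fst u - fst v" using gdist_lt[OF vV uV 4] by simp
    then show ?thesis using walk_rev[OF pp(1)] pp(2,3) s span[OF v u] \<rho>[OF v u] unfolding shortest_path_def
      by (intro exI[of _ "rev ?p"]) auto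
  qed
qed


definition ff :: "nat \<Rightarrow> nat \<Rightarrow> nat" where
  "ff k c = c div 2 * (k + 2) + (if even c then 0 else 2)"

lemma ff_even: "ff k (2 * t) = t * (k + 2)" unfolding ff_def by simp
lemma ff_odd: "ff k (Suc (2 * t)) = t * (k + 2) + 2" unfolding ff_def by simp

lemma ff_step2: "ff k (Suc (Suc c)) = ff k c + (k + 2)"
  unfolding ff_def by simp

lemma ff_step1: assumes "2 \<le> k" shows "ff k c + 2 \<le> ff k (Suc c)"
proof (cases "even c")
  case True
  then obtain t where "c = 2 * t" by blast
  then show ?thesis using ff_even ff_odd by simp
next
  case False
  then obtain t where t: "c = Suc (2 * t)" by (metis oddE Suc_eq_plus1)
  have "Suc c = 2 * Suc t" using t by simp
  then show ?thesis using ff_even[of k "Suc t"] ff_odd[of k t] t assms by simp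
qed

lemma ff_Suc: "ff k c \<le> ff k (Suc c)"
proof (cases "even c")
  case True
  then obtain t where "c = 2 * t" by blast
  then show ?thesis using ff_even ff_odd by simp
next
  case False
  then obtain t where t: "c = Suc (2 * t)" by (metis oddE Suc_eq_plus1)
  have "Suc c = 2 * Suc t" using t by simp
  then show ?thesis using ff_even[of k "Suc t"] ff_odd[of k t] t by simp
qed

lemma ff_mono: "a \<le> b \<Longrightarrow> ff k a \<le> ff k b"
  by (rule lift_Suc_mono_le[of "ff k"]) (auto intro: ff_Suc)

definition valid_cov :: "nat \<Rightarrow> nat \<Rightarrow> nat \<Rightarrow> 'i set \<Rightarrow> ('i \<Rightarrow> nat set) \<Rightarrow> bool" where
  "valid_cov k s n P C \<longleftrightarrow> finite P \<and>
     (\<forall>M\<in>P. C M \<noteq> {} \<and> C M \<subseteq> {s..<n} \<and> (\<forall>a\<in>C M. \<forall>b\<in>C M. b \<le> a + k)) \<and>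
     (\<forall>x. s \<le> x \<and> x < n \<longrightarrow> (\<exists>M\<in>P. x \<in> C M)) \<and>
     (\<forall>M\<in>P. \<forall>a\<in>C M. \<forall>b\<in>C M. \<forall>x\<in>C M. a < x \<and> x < b \<longrightarrow> (\<exists>M'\<in>P. M' \<noteq> M \<and> x \<in> C M'))"

lemma valid_cov_restrict:
  assumes "valid_cov k s n P C" "s \<le> t"
  shows "valid_cov k t n {M\<in>P. C M \<inter> {t..<n} \<noteq> {}} (\<lambda>M. C M \<inter> {t..<n})"
proof -
  note V = assms(1)[unfolded valid_cov_def]
  let ?P = "{M\<in>P. C M \<inter> {t..<n} \<noteq> {}}"
  let ?C = "\<lambda>M. C M \<inter> {t..<n}"
  have 1: "finite ?P" using V by simp
  have 2: "\<forall>M\<in>?P. ?C M \<noteq> {} \<and> ?C M \<subseteq> {t..<n} \<and> (\<forall>a\<in>?C M. \<forall>b\<in>?C M. b \<le> a + k)"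
    using V by blast
  have 3: "\<forall>x. t \<le> x \<and> x < n \<longrightarrow> (\<exists>M\<in>?P. x \<in> ?C M)"
  proof (intro allI impI)
    fix x assume x: "t \<le> x \<and> x < n"
    then obtain M where "M \<in> P" "x \<in> C M" using V assms(2) by (meson le_trans)
    then show "\<exists>M\<in>?P. x \<in> ?C M" using x by (intro bexI[of _ M]) auto
  qed
  have 4: "\<forall>M\<in>?P. \<forall>a\<in>?C M. \<forall>b\<in>?C M. \<forall>x\<in>?C M. a < x \<and> x < b \<longrightarrow> (\<exists>M'\<in>?P. M' \<noteq> M \<and> x \<in> ?C M')"
  proof (intro ballI impI)
    fix M a b x assume M: "M \<in> ?P" and a: "a \<in> ?C M" and b: "b \<in> ?C M" and x: "x \<in> ?C M" and ax: "a < x \<and> x < b"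
    then obtain M' where "M' \<in> P" "M' \<noteq> M" "x \<in> C M'" using V by (metis (no_types, lifting) IntE mem_Collect_eq)
    then show "\<exists>M'\<in>?P. M' \<noteq> M \<and> x \<in> ?C M'" using x by (intro bexI[of _ M']) auto
  qed
  show ?thesis unfolding valid_cov_def using 1 2 3 4 by blast
qed

lemma cover_bound:
  assumes "valid_cov k s n P C" "2 \<le> k"
  shows "n - s \<le> ff k (card P)"
  using assms
proof (induction "card P" arbitrary: P C s rule: less_induct)
  case less
  note V = less.prems(1)[unfolded valid_cov_def]
  have fin: "finite P" using V by blast
  have inC: "s \<le> x \<and> x < n" if "M \<in> P" "x \<in> C M" for M x
  proof -
    have "C M \<subseteq> {s..<n}" using V that(1) by blast
    then show ?thesis using that(2) by auto
  qed
  have spanC: "\<And>M a b. M \<in> P \<Longrightarrow> a \<in> C M \<Longrightarrow> b \<in> C M \<Longrightarrow> b \<le> a + k" using V by blast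
  have cov: "\<And>x. s \<le> x \<Longrightarrow> x < n \<Longrightarrow> \<exists>M\<in>P. x \<in> C M" using V by blast
  have dbl: "\<And>M a b x. M \<in> P \<Longrightarrow> a \<in> C M \<Longrightarrow> b \<in> C M \<Longrightarrow> x \<in> C M \<Longrightarrow> a < x \<Longrightarrow> x < b \<Longrightarrow> \<exists>M'\<in>P. M' \<noteq> M \<and> x \<in> C M'"
    using V by blast
  show ?case
  proof (cases "n \<le> Suc s")
    case True
    show ?thesis
    proof (cases "n \<le> s")
      case True then show ?thesis by simp
    next
      case False
      then obtain M where "M \<in> P" using cov[of s] by auto
      then have "1 \<le> card P" using fin by (metis One_nat_def Suc_leI card_gt_0_iff empty_iff)
      then have "ff k 1 \<le> ff k (card P)" by (rule ff_mono)
      moreover have "ff k 1 = 2" unfolding ff_def by simp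
      ultimately show ?thesis using True by simp
    qed
  next
    case False
    define X where "X = {M\<in>P. C M \<subseteq> {s..s+k+1}}"
    have finX: "finite X" using fin unfolding X_def by simp
    have inX: "M \<in> X" if "M \<in> P" "y \<in> C M" "y \<le> Suc s" for M y
    proof -
      have "C M \<subseteq> {s..s+k+1}"
      proof
        fix z assume "z \<in> C M"
        then show "z \<in> {s..s+k+1}" using spanC[OF that(1,2), of z] inC[OF that(1)] that(3) by force
      qed
      then show ?thesis using that unfolding X_def by simp
    qed
    obtain A where A: "A \<in> P" "s \<in> C A" using cov[of s] False by auto
    obtain B where B: "B \<in> P" "Suc s \<in> C B" using cov[of "Suc s"] False by auto
    have AX: "A \<in> X" using inX A by simp
    have BX: "B \<in> X" using inX B by simp
    show ?thesis
    proof (cases "2 \<le> card X")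
      case True
      define t where "t = s + k + 2"
      define P' where "P' = {M\<in>P. C M \<inter> {t..<n} \<noteq> {}}"
      have V': "valid_cov k t n P' (\<lambda>M. C M \<inter> {t..<n})"
        unfolding P'_def by (rule valid_cov_restrict[OF less.prems(1)]) (simp add: t_def)
      have sub: "P' \<subseteq> P - X" unfolding P'_def X_def t_def by auto
      have XP: "X \<subseteq> P" unfolding X_def by auto
      have "card P' \<le> card (P - X)" using sub fin by (simp add: card_mono)
      also have "\<dots> = card P - card X" using XP finX by (simp add: card_Diff_subset)
      finally have cP': "card P' \<le> card P - 2" using True by simp
      have cP: "2 \<le> card P" using True card_mono[OF fin XP] by simp
      have "n - t \<le> ff k (card P')" by (rule less.hyps[OF _ V' less.prems(2)]) (use cP' cP in simp)
      also have "\<dots> \<le> ff k (card P - 2)" using cP' by (rule ff_mono)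
      finally have "n - t \<le> ff k (card P - 2)" .
      moreover have "ff k (card P) = ff k (card P - 2) + (k + 2)"
        using ff_step2[of k "card P - 2"] cP by (simp add: Suc_diff_Suc numeral_2_eq_2)
      ultimately show ?thesis unfolding t_def by simp
    next
      case False2: False
      have onlyA: "M = A" if "M \<in> X" for M
      proof (rule ccontr)
        assume "M \<noteq> A"
        then have "card {A, M} = 2" by simp
        moreover have "card {A, M} \<le> card X" using AX that finX by (intro card_mono) auto
        ultimately show False using False2 by simp
      qed
      have CA: "C A \<subseteq> {s, Suc s}"
      proof
        fix y assume y: "y \<in> C A"
        show "y \<in> {s, Suc s}"
        proof (rule ccontr)
          assume "y \<notin> {s, Suc s}"
          then have "Suc s < y" using inC[OF A(1) y] by auto
          have "Suc s \<in> C A" using onlyA[OF BX] B by simp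
          then obtain M' where "M' \<in> P" "M' \<noteq> A" "Suc s \<in> C M'"
            using dbl[OF A(1) A(2) y] \<open>Suc s < y\<close> by auto
          then show False using inX onlyA by blast
        qed
      qed
      define t where "t = s + 2"
      define P' where "P' = {M\<in>P. C M \<inter> {t..<n} \<noteq> {}}"
      have V': "valid_cov k t n P' (\<lambda>M. C M \<inter> {t..<n})"
        unfolding P'_def by (rule valid_cov_restrict[OF less.prems(1)]) (simp add: t_def)
      have sub: "P' \<subseteq> P - {A}" unfolding P'_def t_def using CA by auto
      have "card P' \<le> card (P - {A})" using sub fin by (simp add: card_mono)
      also have "\<dots> = card P - 1" using A(1) fin by simp
      finally have cP': "card P' \<le> card P - 1" .
      have cP: "1 \<le> card P" using A(1) fin by (metis One_nat_def Suc_leI card_gt_0_iff empty_iff)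
      have "n - t \<le> ff k (card P')" by (rule less.hyps[OF _ V' less.prems(2)]) (use cP' cP in simp)
      also have "\<dots> \<le> ff k (card P - 1)" using cP' by (rule ff_mono)
      finally have "n - t \<le> ff k (card P - 1)" .
      moreover have "ff k (card P - 1) + 2 \<le> ff k (card P)"
        using ff_step1[OF less.prems(2), of "card P - 1"] cP by simp
      ultimately show ?thesis unfolding t_def by simp
    qed
  qed
qed


definition lab :: "nat \<Rightarrow> nat \<Rightarrow> nat \<Rightarrow> nat \<Rightarrow> nat" where
  "lab n k x j = (let K = k + 2; q = n div K; r = n mod K; t = x div K; d = x mod K in
     if t < q then 2 * t + (if d = 0 \<or> (d \<le> k \<and> j = 0) then 0 else 1)
     else if r \<le> 2 then 2 * q else 2 * q + (if d = 0 \<or> j = 0 then 0 else 1))"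

lemma lab_pair:
  assumes k: "2 \<le> k" and m: "2 \<le> m" and x12: "x1 < x2" "x2 < n" and eq: "lab n k x1 j1 = lab n k x2 j2"
  shows "x2 \<le> x1 + k \<and> (x1 < x \<and> x < x2 \<longrightarrow> (\<exists>j<m. lab n k x j \<noteq> lab n k x1 j1))"
proof -
  define K where "K = k + 2"
  define q where "q = n div K"
  define r where "r = n mod K"
  define t1 where "t1 = x1 div K"
  define t2 where "t2 = x2 div K"
  define o1 where "o1 = x1 mod K"
  define o2 where "o2 = x2 mod K"
  have K0: "0 < K" unfolding K_def by simp
  have n: "n = q * K + r" "r < K" unfolding q_def r_def using K0 by auto
  have x1: "x1 = t1 * K + o1" "o1 < K" unfolding t1_def o1_def using K0 by auto
  have x2: "x2 = t2 * K + o2" "o2 < K" unfolding t2_def o2_def using K0 by auto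
  have t12: "t1 \<le> t2" unfolding t1_def t2_def using x12 by (simp add: div_le_mono)
  have t2q: "t2 \<le> q" unfolding t2_def q_def using x12 by (simp add: div_le_mono)
  have L1: "lab n k x1 j1 = (if t1 < q then 2 * t1 + (if o1 = 0 \<or> (o1 \<le> k \<and> j1 = 0) then 0 else 1)
     else if r \<le> 2 then 2 * q else 2 * q + (if o1 = 0 \<or> j1 = 0 then 0 else 1))"
    unfolding lab_def Let_def K_def[symmetric] q_def r_def t1_def o1_def by simp
  have L2: "lab n k x2 j2 = (if t2 < q then 2 * t2 + (if o2 = 0 \<or> (o2 \<le> k \<and> j2 = 0) then 0 else 1)
     else if r \<le> 2 then 2 * q else 2 * q + (if o2 = 0 \<or> j2 = 0 then 0 else 1))"
    unfolding lab_def Let_def K_def[symmetric] q_def r_def t2_def o2_def by simp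
  have tt: "t1 = t2"
  proof (rule ccontr)
    assume "t1 \<noteq> t2"
    then have "t1 < t2" using t12 by simp
    then have "t1 < q" using t2q by simp
    then have a: "lab n k x1 j1 \<le> 2 * t1 + 1" using L1 by simp
    have b: "2 * t2 \<le> lab n k x2 j2" using L2 t2q by simp
    show False using a b eq \<open>t1 < t2\<close> by linarith
  qed
  have o12: "o1 < o2" using x1 x2 tt x12 by simp
  have tq: "t1 = q \<Longrightarrow> o2 < r" using x2 n tt x12 by simp
  define lx where "lx = lab n k x1 j1"
  have part2: "\<exists>j<m. lab n k x j \<noteq> lx" if x: "x1 < x" "x < x2"
  proof -
    define d where "d = x mod K"
    have tx: "x div K = t1"
      using div_le_mono[of x1 x K] div_le_mono[of x x2 K] x tt unfolding t1_def t2_def by simp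
    have xo: "x = t1 * K + d" "d < K" unfolding d_def using tx K0 by (metis div_mult_mod_eq mod_less_divisor)+
    have oo: "o1 < d" "d < o2" using xo x1 x2 x tt by simp_all
    have LX: "lab n k x j = (if t1 < q then 2 * t1 + (if d = 0 \<or> (d \<le> k \<and> j = 0) then 0 else 1)
       else if r \<le> 2 then 2 * q else 2 * q + (if d = 0 \<or> j = 0 then 0 else 1))" for j
      unfolding lab_def Let_def K_def[symmetric] q_def r_def tx d_def by simp
    show ?thesis
    proof (cases "t1 < q")
      case True
      show ?thesis
      proof (cases "o1 = 0 \<or> (o1 \<le> k \<and> j1 = 0)")
        case True2: True
        have "o2 \<le> k" using eq L1 L2 tt True True2 by (auto split: if_splits)
        then show ?thesis using LX[of 1] L1 True True2 oo m unfolding lx_def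
          by (intro exI[of _ 1]) auto
      next
        case False2: False
        then show ?thesis using LX[of 0] L1 True oo m K_def o12 x2(2) unfolding lx_def
          by (intro exI[of _ 0]) auto
      qed
    next
      case False
      then have tq1: "t1 = q" using t2q tt by simp
      then have "o2 < r" by (rule tq)
      show ?thesis
      proof (cases "r \<le> 2")
        case True
        then show ?thesis using oo \<open>o2 < r\<close> by simp
      next
        case False2: False
        show ?thesis
        proof (cases "o1 = 0 \<or> j1 = 0")
          case True
          then show ?thesis using LX[of 1] L1 tq1 False2 oo m unfolding lx_def
            by (intro exI[of _ 1]) auto
        next
          case False3: False
          then show ?thesis using LX[of 0] L1 tq1 False2 oo m unfolding lx_def
            by (intro exI[of _ 0]) auto
        qed
      qed
    qed
  qed
  have part1: "x2 \<le> x1 + k"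
  proof (cases "t1 < q")
    case True
    show ?thesis
    proof (cases "o1 = 0 \<or> (o1 \<le> k \<and> j1 = 0)")
      case True2: True
      have "o2 \<le> k" using eq L1 L2 tt True True2 by (auto split: if_splits)
      then show ?thesis using x1 x2 tt by simp
    next
      case False2: False
      then have "1 \<le> o1" by auto
      then show ?thesis using x1 x2 tt K_def by simp
    qed
  next
    case False
    then have "t1 = q" using t2q tt by simp
    then have "o2 < r" by (rule tq)
    then show ?thesis using x1 x2 tt n K_def by simp
  qed
  show ?thesis using part1 part2 unfolding lx_def by blast
qed


lemma F_arith:
  fixes n k :: nat
  assumes k: "2 \<le> k" and nk: "k + 2 \<le> n"
  defines "F \<equiv> (if n mod (k + 2) = 0 then 2 * (n div (k + 2))
     else if n mod (k + 2) \<in> {1, 2} then 2 * (n div (k + 2)) + 1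
     else 2 * (n div (k + 2)) + 2)"
  shows "ff k (F - 1) < n" "\<And>x j. x < n \<Longrightarrow> lab n k x j < F"
proof -
  define K where "K = k + 2"
  define q where "q = n div K"
  define r where "r = n mod K"
  have K0: "0 < K" unfolding K_def by simp
  have n: "n = q * K + r" "r < K" unfolding q_def r_def using K0 by auto
  have q1: "1 \<le> q" unfolding q_def using nk K_def by (metis div_le_mono div_self K0 less_not_refl2)
  then obtain q' where q': "q = Suc q'" by (cases q) auto
  have F: "F = (if r = 0 then 2 * q else if r \<in> {1, 2} then 2 * q + 1 else 2 * q + 2)"
    unfolding F_def K_def[symmetric] q_def r_def by simp
  show "ff k (F - 1) < n"
  proof (cases "r = 0")
    case True
    then have "F - 1 = Suc (2 * q')" using F q' by simp
    then have "ff k (F - 1) = q' * K + 2" using ff_odd[of k q'] K_def by simp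
    then show ?thesis using n True q' K_def k by simp
  next
    case False
    show ?thesis
    proof (cases "r \<in> {1, 2}")
      case True
      then have "F - 1 = 2 * q" using F False by simp
      then have "ff k (F - 1) = q * K" using ff_even[of k q] K_def by simp
      then show ?thesis using n False by simp
    next
      case False2: False
      then have "F - 1 = Suc (2 * q)" using F False by simp
      then have "ff k (F - 1) = q * K + 2" using ff_odd[of k q] K_def by simp
      then show ?thesis using n False False2 by simp
    qed
  qed
  fix x j assume x: "x < n"
  define t where "t = x div K"
  define d where "d = x mod K"
  have L: "lab n k x j = (if t < q then 2 * t + (if d = 0 \<or> (d \<le> k \<and> j = 0) then 0 else 1)
     else if r \<le> 2 then 2 * q else 2 * q + (if d = 0 \<or> j = 0 then 0 else 1))"
    unfolding lab_def Let_def K_def[symmetric] q_def r_def t_def d_def by simp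
  have tq: "t \<le> q" unfolding t_def q_def using x by (simp add: div_le_mono)
  have xx: "x = t * K + d" unfolding t_def d_def by simp
  show "lab n k x j < F"
  proof (cases "t < q")
    case True
    then show ?thesis using L F by auto
  next
    case False
    then have "t = q" using tq by simp
    then have "0 < r" using xx x n by (metis add.right_neutral le_add1 not_gr_zero not_less)
    then show ?thesis using L F False by auto
  qed
qed


lemma lower_bound:
  assumes m: "1 \<le> m" and k: "2 \<le> k"
    and P: "is_partition (fst (SG n m)) P" "finite P" "\<forall>M\<in>P. k_dist_mv_set (SG n m) k M"
  shows "n \<le> ff k (card P)"
proof -
  let ?C = "\<lambda>M. fst ` M"
  have PV: "\<Union>P = fst (SG n m)" "{} \<notin> P" using P(1) unfolding is_partition_def by auto
  have MV: "M \<subseteq> fst (SG n m)" if "M \<in> P" for M using PV that by blast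
  have "valid_cov k 0 n P ?C"
    unfolding valid_cov_def
  proof (intro conjI ballI allI impI)
    show "finite P" by fact
    fix M assume M: "M \<in> P"
    show "?C M \<noteq> {}" using M PV by auto
    show "?C M \<subseteq> {0..<n}" using MV[OF M] unfolding SG_V by auto
    fix a b assume "a \<in> ?C M" "b \<in> ?C M"
    then obtain u v where "u \<in> M" "v \<in> M" "a = fst u" "b = fst v" by auto
    then show "b \<le> a + k" using mv_span P(3) M by blast
  next
    fix x assume x: "0 \<le> x \<and> x < n"
    then have "(x, 0) \<in> \<Union>P" using PV m unfolding SG_V by auto
    then obtain M where "M \<in> P" "(x, 0) \<in> M" by auto
    then show "\<exists>M\<in>P. x \<in> ?C M" by force
  next
    fix M a b x assume M: "M \<in> P" and a: "a \<in> ?C M" and b: "b \<in> ?C M" and x: "x \<in> ?C M"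
      and abx: "a < x \<and> x < b"
    obtain u v where uv: "u \<in> M" "v \<in> M" "a = fst u" "b = fst v" using a b by auto
    obtain j where j: "j < m" "(x, j) \<notin> M" using mv_gap[of n m k M u v x] P(3) M uv abx by auto
    have "x < n" using x MV[OF M] unfolding SG_V by auto
    then have "(x, j) \<in> \<Union>P" using PV j unfolding SG_V by auto
    then obtain M' where "M' \<in> P" "(x, j) \<in> M'" by auto
    then show "\<exists>M'\<in>P. M' \<noteq> M \<and> x \<in> ?C M'" using j by (intro bexI[of _ M']) force+
  qed
  from cover_bound[OF this k] show ?thesis by simp
qed

lemma upper_bound:
  assumes m: "2 \<le> m" and k: "2 \<le> k" and F: "\<And>x j. x < n \<Longrightarrow> lab n k x j < F"
  shows "\<exists>P. is_partition (fst (SG n m)) P \<and> finite P \<and> card P \<le> F \<and> (\<forall>M\<in>P. k_dist_mv_set (SG n m) k M)"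
proof -
  define V where "V = fst (SG n m)"
  define lf where "lf = (\<lambda>v::nat\<times>nat. lab n k (fst v) (snd v))"
  define cl where "cl = (\<lambda>l. {v\<in>V. lf v = l})"
  define P where "P = cl ` (lf ` V)"
  have finV: "finite V" unfolding V_def SG_V by simp
  have part: "is_partition V P" unfolding is_partition_def P_def cl_def by auto
  have fin: "finite P" unfolding P_def using finV by simp
  have "card P \<le> card (lf ` V)" unfolding P_def by (rule card_image_le) (use finV in simp)
  also have "\<dots> \<le> card {..<F}" by (rule card_mono) (auto simp: lf_def V_def SG_V intro!: F)
  finally have cP: "card P \<le> F" by simp
  have mv: "k_dist_mv_set (SG n m) k M" if "M \<in> P" for M
  proof -
    obtain l where M: "M = cl l" using \<open>M \<in> P\<close> unfolding P_def by auto
    have MV: "M \<subseteq> fst (SG n m)" unfolding M cl_def V_def by auto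
    have inM: "fst u < n" "snd u < m" if "u \<in> M" for u using that MV unfolding SG_V by auto
    show ?thesis
    proof (rule mv_intro[OF MV])
      show "1 \<le> k" using k by simp
    next
      fix u v assume u: "u \<in> M" and v: "v \<in> M"
      show "fst v \<le> fst u + k"
      proof (cases "fst u < fst v")
        case True
        have "lab n k (fst u) (snd u) = lab n k (fst v) (snd v)" using u v unfolding M cl_def lf_def by simp
        then show ?thesis using lab_pair[OF k m True inM(1)[OF v]] by blast
      qed simp
    next
      fix u v x assume u: "u \<in> M" and v: "v \<in> M" and x: "fst u < x" "x < fst v"
      have "lab n k (fst u) (snd u) = lab n k (fst v) (snd v)" using u v unfolding M cl_def lf_def by simp
      then obtain j where "j < m" "lab n k x j \<noteq> lab n k (fst u) (snd u)"
        using lab_pair[OF k m _ inM(1)[OF v], of "fst u" _ _ x] x by auto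
      moreover have "lf u = l" using u unfolding M cl_def by simp
      ultimately show "\<exists>j<m. (x, j) \<notin> M" unfolding M cl_def lf_def by auto
    qed
  qed
  show ?thesis using part fin cP mv unfolding V_def by blast
qed

theorem proposition5p1:
  fixes n m k :: nat
  assumes "n \<ge> 4" and "m \<ge> 2" and "2 \<le> k" and "k \<le> n - 2"
  shows "chi_mu_k k (strong_product (path_graph n) (complete_graph m)) =
    (if n mod (k + 2) = 0 then 2 * (n div (k + 2))
     else if n mod (k + 2) \<in> {1, 2} then 2 * (n div (k + 2)) + 1
     else 2 * (n div (k + 2)) + 2)"
proof -
  define F where "F = (if n mod (k + 2) = 0 then 2 * (n div (k + 2))
     else if n mod (k + 2) \<in> {1, 2} then 2 * (n div (k + 2)) + 1
     else 2 * (n div (k + 2)) + 2)"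
  have nk: "k + 2 \<le> n" using assms by simp
  have FA1: "ff k (F - 1) < n" unfolding F_def by (rule F_arith(1)[OF assms(3) nk])
  have FA2: "lab n k x j < F" if "x < n" for x j unfolding F_def by (rule F_arith(2)[OF assms(3) nk that])
  define Q where "Q = (\<lambda>c. \<exists>P. is_partition (fst (SG n m)) P \<and> finite P \<and> card P = c \<and> (\<forall>M\<in>P. k_dist_mv_set (SG n m) k M))"
  have chi: "chi_mu_k k (strong_product (path_graph n) (complete_graph m)) = (LEAST c. Q c)"
    unfolding chi_mu_k_def SG_def Q_def by (rule refl)
  obtain P0 where P0: "is_partition (fst (SG n m)) P0" "finite P0" "card P0 \<le> F" "\<forall>M\<in>P0. k_dist_mv_set (SG n m) k M"
    using upper_bound[OF assms(2,3), of n F] FA2 by blast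
  have Q0: "Q (card P0)" unfolding Q_def using P0 by blast
  have le: "(LEAST c. Q c) \<le> F" using Least_le[of Q, OF Q0] P0(3) by (rule le_trans)
  obtain P1 where P1: "is_partition (fst (SG n m)) P1" "finite P1" "card P1 = (LEAST c. Q c)"
    "\<forall>M\<in>P1. k_dist_mv_set (SG n m) k M"
    using LeastI[of Q, OF Q0] unfolding Q_def by blast
  have nb: "n \<le> ff k (card P1)" by (rule lower_bound) (use assms P1 in auto)
  have ge: "F \<le> card P1"
  proof (rule ccontr)
    assume "\<not> F \<le> card P1"
    then have "card P1 \<le> F - 1" by linarith
    then have "ff k (card P1) \<le> ff k (F - 1)" by (rule ff_mono)
    then show False using nb FA1 by linarith
  qed
  have "chi_mu_k k (strong_product (path_graph n) (complete_graph m)) = F"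
    using le ge P1(3) chi by linarith
  then show ?thesis unfolding F_def .
qed

end
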